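(* Let $n\ge1$, $U=\mathcal{U}(osp(1|2n))$ and $\Omega\subset U$ as defined below. For every $a\in\{1,\dots,2n\}$, $\sigma_a\triangleright\Omega\subset\Omega$. Consequently the action $\triangleright$ makes $\Omega$ an $osp(1|2n)$-submodule of $U$.
   Context: $\mathcal{U}(osp(1|2n))$ is the associative superalgebra over $\mathbb{C}$ generated by odd elements $\sigma_a$ and even elements $\sigma_{ab}=\sigma_{ba}$ ($1\le a,b\le 2n$) subject to $\{\sigma_a,\sigma_b\}=\sigma_{ab}$, $[\sigma_a,\sigma_{bc}]=-g_{ab}\sigma_c-g_{ac}\sigma_b$, $[\sigma_{ab},\sigma_{cd}]=-g_{ac}\sigma_{bd}-g_{ad}\sigma_{bc}-g_{bc}\sigma_{ad}-g_{bd}\sigma_{ac}$, where $(g_{ab})=\begin{pmatrix}0&-I_n\\ I_n&0\end{pmatrix}$. The action $\triangleright$ on homogeneous $x\in U$ is: $\sigma_{ab}\triangleright x=[\sigma_{ab},x]$; $\sigma_a\triangleright x=\sigma_ax+x\sigma_a$ if $x$ is even; $\sigma_a\triangleright x=\sigma_ax-x\sigma_a$ if $x$ is odd. This action satisfies $\{\sigma_a,\sigma_b\}\triangleright x=\sigma_a\triangleright(\sigma_b\triangleright x)+\sigma_b\triangleright(\sigma_a\triangleright x)$ and the analogous identities for the other relations, so it makes $U$ an $osp(1|2n)$-module. For indices $a_1,\dots,a_p$, $[a_1\dots a_p]=\sum_{s\in\mathfrak{S}_p}\varepsilon(s)\sigma_{a_{s(1)}}\cdots\sigma_{a_{s(p)}}$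 ($[\,]=1$ for $p=0$), and $\Omega$ is the span of these for $0\le p\le 2n$. *)

theory Defs
  imports Complex_Main "HOL-Library.Function_Algebras" "HOL-Combinatorics.Permutations"
begin

text \<open>Generators of the free associative algebra: odd generators sigma_a (Odd a)
 and even generators sigma_ab (Even a b). Indices are meant to range over 1..2n.\<close>
datatype osp_gen = Odd nat | Even nat nat

text \<open>Free associative algebra over the complex numbers on these generators:
 an element is a coefficient function on words (noncommutative monomials).
 Addition/subtraction are pointwise (Function_Algebras); only finitely supported
 elements ever arise below.\<close>
type_synonym fa = "osp_gen list \<Rightarrow> complex"

definition mon :: "osp_gen list \<Rightarrow> fa" where
  "mon u = (\<lambda>w. if w = u then 1 else 0)"

definition fscale :: "complex \<Rightarrow> fa \<Rightarrow> fa" where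
  "fscale c x = (\<lambda>w. c * x w)"

definition fmul :: "fa \<Rightarrow> fa \<Rightarrow> fa" where
  "fmul x y = (\<lambda>w. \<Sum>i\<le>length w. x (take i w) * y (drop i w))"

definition fspan :: "fa set \<Rightarrow> fa set" where
  "fspan S = {x. \<exists>F c. finite F \<and> F \<subseteq> S \<and> x = (\<Sum>v\<in>F. fscale (c v) v)}"

definition sig :: "nat \<Rightarrow> fa" where "sig a = mon [Odd a]"
definition sig2 :: "nat \<Rightarrow> nat \<Rightarrow> fa" where "sig2 a b = mon [Even a b]"

text \<open>The bilinear form g = ((0, -I_n), (I_n, 0)) on indices 1..2n.\<close>
definition g :: "nat \<Rightarrow> nat \<Rightarrow> nat \<Rightarrow> complex" where
  "g n a b = (if 1 \<le> a \<and> a \<le> n \<and> b = a + n then -1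
              else if n < a \<and> a \<le> 2*n \<and> b + n = a then 1 else 0)"

definition comm :: "fa \<Rightarrow> fa \<Rightarrow> fa" where "comm x y = fmul x y - fmul y x"
definition acomm :: "fa \<Rightarrow> fa \<Rightarrow> fa" where "acomm x y = fmul x y + fmul y x"

text \<open>Defining relations of U(osp(1|2n)) (as elements to be set to zero).\<close>
definition rels :: "nat \<Rightarrow> fa set" where
  "rels n =
     {sig2 a b - sig2 b a | a b. a \<in> {1..2*n} \<and> b \<in> {1..2*n}}
   \<union> {acomm (sig a) (sig b) - sig2 a b | a b. a \<in> {1..2*n} \<and> b \<in> {1..2*n}}
   \<union> {comm (sig a) (sig2 b c) + fscale (g n a b) (sig c) + fscale (g n a c) (sig b)
       | a b c. a \<in> {1..2*n} \<and> b \<in> {1..2*n} \<and> c \<in> {1..2*n}}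
   \<union> {comm (sig2 a b) (sig2 c d) + fscale (g n a c) (sig2 b d) + fscale (g n a d) (sig2 b c)
         + fscale (g n b c) (sig2 a d) + fscale (g n b d) (sig2 a c)
       | a b c d. a \<in> {1..2*n} \<and> b \<in> {1..2*n} \<and> c \<in> {1..2*n} \<and> d \<in> {1..2*n}}"

text \<open>Two-sided ideal generated by the relations; U(osp(1|2n)) = free algebra / I.\<close>
definition Iideal :: "nat \<Rightarrow> fa set" where
  "Iideal n = fspan {fmul (mon u) (fmul r (mon v)) | u r v. r \<in> rels n}"

text \<open>Z2-grading: a word is odd iff it contains an odd number of odd generators.
 The relations are homogeneous, so this grading descends to U.\<close>
definition odd_word :: "osp_gen list \<Rightarrow> bool" where
  "odd_word w = odd (length (filter (\<lambda>x. case x of Odd _ \<Rightarrow> True | Even _ _ \<Rightarrow> False) w))"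

definition even_part :: "fa \<Rightarrow> fa" where
  "even_part x = (\<lambda>w. if odd_word w then 0 else x w)"
definition odd_part :: "fa \<Rightarrow> fa" where
  "odd_part x = (\<lambda>w. if odd_word w then x w else 0)"

text \<open>The action (extended linearly from homogeneous elements).\<close>
definition act_odd :: "nat \<Rightarrow> fa \<Rightarrow> fa" where
  "act_odd a x = acomm (sig a) (even_part x) + comm (sig a) (odd_part x)"
definition act_even :: "nat \<Rightarrow> nat \<Rightarrow> fa \<Rightarrow> fa" where
  "act_even a b x = comm (sig2 a b) x"

definition asym :: "nat list \<Rightarrow> fa" where
  "asym as = (\<Sum>s\<in>{s. s permutes {0..<length as}}.
                fscale (of_int (sign s)) (mon (map (\<lambda>i. Odd (as ! s i)) [0..<length as])))"

definition Omega :: "nat \<Rightarrow> fa set" where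
  "Omega n = fspan {asym as | as. length as \<le> 2*n \<and> set as \<subseteq> {1..2*n}}"

end

theory Submission
  imports Defs
begin

declare plus_fun_apply[simp del] zero_fun_apply[simp del] times_fun_apply[simp del]
  one_fun_apply[simp del] minus_apply[simp del] uminus_apply[simp del]
lemmas fapp = plus_fun_apply zero_fun_apply minus_apply uminus_apply

lemma fscale_add_right: "fscale a (x + y) = fscale a x + fscale a y"
  by (simp add: fscale_def fun_eq_iff fapp algebra_simps)
lemma fscale_add_left: "fscale (a + b) x = fscale a x + fscale b x"
  by (simp add: fscale_def fun_eq_iff fapp algebra_simps)
lemma fscale_fscale[simp]: "fscale a (fscale b x) = fscale (a * b) x"
  by (simp add: fscale_def fun_eq_iff fapp algebra_simps)
lemma fscale_one[simp]: "fscale 1 x = x"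
  by (simp add: fscale_def fun_eq_iff fapp algebra_simps)

interpretation fa: vector_space fscale
  by unfold_locales (auto simp: fscale_add_right fscale_add_left)

lemma fspan_eq: "fspan S = fa.span S"
  unfolding fspan_def fa.span_explicit by auto

lemma fscale_zero[simp]: "fscale 0 x = 0" "fscale c 0 = 0"
  by (auto simp: fscale_def fun_eq_iff fapp)
lemma fscale_diff: "fscale c (x - y) = fscale c x - fscale c y"
  by (simp add: fscale_def fun_eq_iff fapp algebra_simps)
lemma fscale_minus: "fscale c (- y) = - fscale c y"
  by (simp add: fscale_def fun_eq_iff fapp algebra_simps)
lemma fscale_neg1: "fscale (-1) y = - y"
  by (simp add: fscale_def fun_eq_iff fapp algebra_simps)
lemma fscale_sum: "fscale c (sum f A) = (\<Sum>a\<in>A. fscale c (f a))"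
  by (rule fa.scale_sum_right)
lemma fscale_sum_left: "fscale (sum f A) x = (\<Sum>a\<in>A. fscale (f a) x)"
  by (rule fa.scale_sum_left)

lemma sum_fun_apply: "(sum f A) w = (\<Sum>a\<in>A. f a w)"
  by (induction A rule: infinite_finite_induct) (auto simp: fapp)

lemma fmul_add_left: "fmul (x + y) z = fmul x z + fmul y z"
  by (simp add: fmul_def fun_eq_iff fapp algebra_simps sum.distrib)
lemma fmul_add_right: "fmul z (x + y) = fmul z x + fmul z y"
  by (simp add: fmul_def fun_eq_iff fapp algebra_simps sum.distrib)
lemma fmul_diff_left: "fmul (x - y) z = fmul x z - fmul y z"
  by (simp add: fmul_def fun_eq_iff fapp algebra_simps sum_subtractf)
lemma fmul_diff_right: "fmul z (x - y) = fmul z x - fmul z y"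
  by (simp add: fmul_def fun_eq_iff fapp algebra_simps sum_subtractf)
lemma fmul_minus_left: "fmul (- x) z = - fmul x z"
  by (simp add: fmul_def fun_eq_iff fapp sum_negf)
lemma fmul_minus_right: "fmul z (- x) = - fmul z x"
  by (simp add: fmul_def fun_eq_iff fapp sum_negf)
lemma fmul_zero[simp]: "fmul 0 z = 0" "fmul z 0 = 0" "fmul (\<lambda>a. 0) z = (\<lambda>a. 0)" "fmul z (\<lambda>a. 0) = (\<lambda>a. 0)"
  by (simp_all add: fmul_def fun_eq_iff fapp)
lemma fmul_scale_left: "fmul (fscale c x) z = fscale c (fmul x z)"
  by (simp add: fmul_def fscale_def fun_eq_iff fapp sum_distrib_left algebra_simps)
lemma fmul_scale_right: "fmul z (fscale c x) = fscale c (fmul z x)"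
  by (simp add: fmul_def fscale_def fun_eq_iff fapp sum_distrib_left algebra_simps)
lemma fmul_sum_left: "fmul (sum f A) z = (\<Sum>a\<in>A. fmul (f a) z)"
proof (induction A rule: infinite_finite_induct)
  case (insert a F)
  then show ?case by (metis fmul_add_left sum.insert)
qed simp_all
lemma fmul_sum_right: "fmul z (sum f A) = (\<Sum>a\<in>A. fmul z (f a))"
proof (induction A rule: infinite_finite_induct)
  case (insert a F)
  then show ?case by (metis fmul_add_right sum.insert)
qed simp_all

lemmas fmul_lin = fmul_add_left fmul_add_right fmul_diff_left fmul_diff_right
  fmul_minus_left fmul_minus_right fmul_scale_left fmul_scale_right fmul_sum_left fmul_sum_right

lemma fmul_mon_mon: "fmul (mon u) (mon v) = mon (u @ v)"
proof
  fix w
  have "fmul (mon u) (mon v) w = (\<Sum>i\<le>length w. if i = length u \<and> w = u @ v then 1 else 0)"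
    unfolding fmul_def mon_def
  proof (rule sum.cong)
    fix i assume "i \<in> {..length w}"
    then show "(if take i w = u then 1 else 0) * (if drop i w = v then 1 else 0) =
          (if i = length u \<and> w = u @ v then 1 else (0::complex))"
      by (auto simp: min_def)
  qed simp
  also have "\<dots> = mon (u @ v) w"
    by (auto simp: mon_def sum.delta)
  finally show "fmul (mon u) (mon v) w = mon (u @ v) w" .
qed

lemma fmul_assoc: "fmul (fmul x y) z = fmul x (fmul y z)" for x y z :: fa
proof
  fix w :: "osp_gen list"
  let ?n = "length w"
  define F where "F j k = x (take j w) * y (take k (drop j w)) * z (drop (j + k) w)" for j k
  have "fmul (fmul x y) z w = (\<Sum>i\<le>?n. \<Sum>j\<le>i. F j (i - j))"
    unfolding fmul_def F_def
    by (auto simp: sum_distrib_right min_def take_drop intro!: sum.cong)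
  also have "\<dots> = (\<Sum>(j,k)\<in>{(j,k). j + k < Suc ?n}. F j k)"
    by (subst sum.triangle_reindex) (simp add: lessThan_Suc_atMost)
  also have "{(j,k). j + k < Suc ?n} = Sigma {..?n} (\<lambda>j. {..?n - j})"
    by auto
  also have "(\<Sum>(j,k)\<in>Sigma {..?n} (\<lambda>j. {..?n - j}). F j k) = (\<Sum>j\<le>?n. \<Sum>k\<le>?n - j. F j k)"
    by (rule sum.Sigma[symmetric]) auto
  also have "\<dots> = fmul x (fmul y z) w"
    unfolding fmul_def F_def
    by (auto simp: sum_distrib_left algebra_simps intro!: sum.cong)
  finally show "fmul (fmul x y) z w = fmul x (fmul y z) w" .
qed

lemma mon_Nil_left[simp]: "fmul (mon []) x = x"
proof
  fix w show "fmul (mon []) x w = x w"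
    unfolding fmul_def mon_def
    by (subst sum.remove[of _ 0]) (auto intro!: sum.neutral)
qed
lemma mon_Nil_right[simp]: "fmul x (mon []) = x"
proof
  fix w show "fmul x (mon []) w = x w"
    unfolding fmul_def mon_def
    by (subst sum.remove[of _ "length w"]) (auto intro!: sum.neutral)
qed

definition lin :: "(fa \<Rightarrow> fa) \<Rightarrow> bool" where
  "lin f \<longleftrightarrow> (\<forall>x y. f (x + y) = f x + f y) \<and> (\<forall>c x. f (fscale c x) = fscale c (f x))"

lemma linI: "(\<And>x y. f (x + y) = f x + f y) \<Longrightarrow> (\<And>c x. f (fscale c x) = fscale c (f x)) \<Longrightarrow> lin f"
  by (auto simp: lin_def)

lemma lin_add: "lin f \<Longrightarrow> f (x + y) = f x + f y" by (auto simp: lin_def)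
lemma lin_scale: "lin f \<Longrightarrow> f (fscale c x) = fscale c (f x)" by (auto simp: lin_def)
lemma lin_zero: "lin f \<Longrightarrow> f 0 = 0"
  using lin_scale[of f 0 0] by simp
lemma lin_neg: "lin f \<Longrightarrow> f (- x) = - f x"
  using lin_scale[of f "-1" x] by (simp add: fscale_neg1)
lemma lin_diff: "lin f \<Longrightarrow> f (x - y) = f x - f y"
  using lin_add[of f x "- y"] lin_neg[of f y] by simp
lemma lin_sum: "lin f \<Longrightarrow> f (sum h A) = (\<Sum>a\<in>A. f (h a))"
proof (induction A rule: infinite_finite_induct)
  case (infinite A) then show ?case using lin_zero[of f] by simp
next
  case empty then show ?case using lin_zero[of f] by simp
next
  case (insert a F) then show ?case using lin_add[of f] by simp
qed

lemma lin_subspace: "lin f \<Longrightarrow> fa.subspace V \<Longrightarrow> fa.subspace {x. f x \<in> V}"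
  unfolding fa.subspace_def by (auto simp: lin_add lin_scale lin_zero)

lemma lin_span: "lin f \<Longrightarrow> fa.subspace V \<Longrightarrow> (\<And>x. x \<in> S \<Longrightarrow> f x \<in> V) \<Longrightarrow> x \<in> fa.span S \<Longrightarrow> f x \<in> V"
  using fa.span_induct[of x S "\<lambda>x. f x \<in> V"] lin_subspace[of f V] by auto

lemma lin_fmul_left: "lin (\<lambda>x. fmul x z)"
  by (rule linI) (simp_all add: fmul_lin)
lemma lin_fmul_right: "lin (\<lambda>x. fmul z x)"
  by (rule linI) (simp_all add: fmul_lin)

definition Igens :: "nat \<Rightarrow> fa set" where
  "Igens n = {fmul (mon u) (fmul r (mon v)) | u r v. r \<in> rels n}"

lemma Iideal_span: "Iideal n = fa.span (Igens n)"
  unfolding Iideal_def Igens_def fspan_eq ..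

definition monspan :: "fa set" where "monspan = fa.span (range mon)"

lemma I_subspace: "fa.subspace (Iideal n)"
  by (simp add: Iideal_span)

lemma I_add: "x \<in> Iideal n \<Longrightarrow> y \<in> Iideal n \<Longrightarrow> x + y \<in> Iideal n"
  by (simp add: Iideal_span fa.span_add)
lemma I_diff: "x \<in> Iideal n \<Longrightarrow> y \<in> Iideal n \<Longrightarrow> x - y \<in> Iideal n"
  by (simp add: Iideal_span fa.span_diff)
lemma I_scale: "x \<in> Iideal n \<Longrightarrow> fscale c x \<in> Iideal n"
  by (simp add: Iideal_span fa.span_scale)
lemma I_zero: "0 \<in> Iideal n"
  by (simp add: Iideal_span fa.span_zero)
lemma I_neg: "x \<in> Iideal n \<Longrightarrow> - x \<in> Iideal n"
  by (simp add: Iideal_span fa.span_neg)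
lemma I_sum: "(\<And>a. a \<in> A \<Longrightarrow> f a \<in> Iideal n) \<Longrightarrow> sum f A \<in> Iideal n"
  by (simp add: Iideal_span fa.span_sum)

lemma I_left_mon: assumes "i \<in> Iideal n" shows "fmul (mon u) i \<in> Iideal n"
proof -
  have "i \<in> fa.span (Igens n)" using assms by (simp add: Iideal_span)
  then show ?thesis
  proof (rule lin_span[OF lin_fmul_right I_subspace, rotated])
    fix x assume "x \<in> Igens n"
    then obtain u' r v where x: "x = fmul (mon u') (fmul r (mon v))" "r \<in> rels n"
      by (auto simp: Igens_def)
    have "fmul (mon u) x = fmul (mon (u @ u')) (fmul r (mon v))"
      by (simp add: x fmul_assoc[symmetric] fmul_mon_mon)
    then show "fmul (mon u) x \<in> Iideal n"
      using x(2) by (auto simp: Iideal_span Igens_def intro!: fa.span_base)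
  qed
qed

lemma I_right_mon: assumes "i \<in> Iideal n" shows "fmul i (mon u) \<in> Iideal n"
proof -
  have "i \<in> fa.span (Igens n)" using assms by (simp add: Iideal_span)
  then show ?thesis
  proof (rule lin_span[OF lin_fmul_left I_subspace, rotated])
    fix x assume "x \<in> Igens n"
    then obtain u' r v where x: "x = fmul (mon u') (fmul r (mon v))" "r \<in> rels n"
      by (auto simp: Igens_def)
    have "fmul x (mon u) = fmul (mon u') (fmul r (mon (v @ u)))"
      by (simp add: x fmul_assoc fmul_mon_mon)
    then show "fmul x (mon u) \<in> Iideal n"
      using x(2) by (auto simp: Iideal_span Igens_def intro!: fa.span_base)
  qed
qed

lemma I_left: assumes "x \<in> monspan" "i \<in> Iideal n" shows "fmul x i \<in> Iideal n"
  using assms(1) unfolding monspan_def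
  by (rule lin_span[OF lin_fmul_left I_subspace, rotated]) (auto intro: I_left_mon[OF assms(2)])

lemma I_right: assumes "x \<in> monspan" "i \<in> Iideal n" shows "fmul i x \<in> Iideal n"
  using assms(1) unfolding monspan_def
  by (rule lin_span[OF lin_fmul_right I_subspace, rotated]) (auto intro: I_right_mon[OF assms(2)])

lemma rels_I: "r \<in> rels n \<Longrightarrow> r \<in> Iideal n"
  unfolding Iideal_span Igens_def
  by (rule fa.span_base) (auto intro!: exI[of _ "[]"])

lemma monspan_mon[simp]: "mon u \<in> monspan"
  by (auto simp: monspan_def intro: fa.span_base)
lemma monspan_sig[simp]: "sig a \<in> monspan" "sig2 a b \<in> monspan"
  by (simp_all add: sig_def sig2_def)
lemma monspan_fmul: assumes "x \<in> monspan" "y \<in> monspan" shows "fmul x y \<in> monspan"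
proof -
  have h: "fmul x (mon v) \<in> monspan" for v
    using assms(1) unfolding monspan_def
    by (rule lin_span[OF lin_fmul_left fa.subspace_span, rotated]) (auto simp: fmul_mon_mon intro: fa.span_base)
  show ?thesis
    using assms(2) unfolding monspan_def
    by (rule lin_span[OF lin_fmul_right fa.subspace_span, rotated]) (use h in \<open>auto simp: monspan_def\<close>)
qed
lemma monspan_add: "x \<in> monspan \<Longrightarrow> y \<in> monspan \<Longrightarrow> x + y \<in> monspan"
  by (simp add: monspan_def fa.span_add)
lemma monspan_diff: "x \<in> monspan \<Longrightarrow> y \<in> monspan \<Longrightarrow> x - y \<in> monspan"
  by (simp add: monspan_def fa.span_diff)
lemma monspan_scale: "x \<in> monspan \<Longrightarrow> fscale c x \<in> monspan"
  by (simp add: monspan_def fa.span_scale)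
lemma monspan_sum: "(\<And>a. a \<in> A \<Longrightarrow> f a \<in> monspan) \<Longrightarrow> sum f A \<in> monspan"
  by (simp add: monspan_def fa.span_sum)

definition isOdd :: "osp_gen \<Rightarrow> bool" where
  "isOdd x = (case x of Odd _ \<Rightarrow> True | Even _ _ \<Rightarrow> False)"
definition nodd :: "osp_gen list \<Rightarrow> nat" where
  "nodd w = length (filter isOdd w)"

lemma odd_word_nodd: "odd_word w = odd (nodd w)"
  by (simp add: odd_word_def nodd_def isOdd_def[abs_def])
lemma nodd_append[simp]: "nodd (u @ v) = nodd u + nodd v"
  by (simp add: nodd_def)
lemma nodd_Cons_Odd[simp]: "nodd (Odd a # w) = Suc (nodd w)"
  by (simp add: nodd_def isOdd_def)
lemma nodd_Cons_Even[simp]: "nodd (Even a b # w) = nodd w"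
  by (simp add: nodd_def isOdd_def)
lemma nodd_Nil[simp]: "nodd [] = 0"
  by (simp add: nodd_def)
lemma nodd_map_Odd[simp]: "nodd (map Odd as) = length as"
  by (induction as) auto

definition hom :: "nat \<Rightarrow> fa \<Rightarrow> bool" where
  "hom k x \<longleftrightarrow> (\<forall>w. x w \<noteq> 0 \<longrightarrow> odd (nodd w) = odd k)"

lemma hom_cong: "hom k x \<Longrightarrow> even k = even l \<Longrightarrow> hom l x"
  by (auto simp: hom_def)
lemma hom_zero[simp]: "hom k 0"
  by (simp add: hom_def fapp)
lemma hom_add: "hom k x \<Longrightarrow> hom k y \<Longrightarrow> hom k (x + y)"
  unfolding hom_def fapp by (metis add.left_neutral)
lemma hom_diff: "hom k x \<Longrightarrow> hom k y \<Longrightarrow> hom k (x - y)"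
  unfolding hom_def fapp by (metis diff_self diff_zero)
lemma hom_neg: "hom k x \<Longrightarrow> hom k (- x)"
  by (auto simp: hom_def fapp)
lemma hom_scale: "hom k x \<Longrightarrow> hom k (fscale c x)"
  by (auto simp: hom_def fscale_def)
lemma hom_sum: "(\<And>a. a \<in> A \<Longrightarrow> hom k (f a)) \<Longrightarrow> hom k (sum f A)"
  by (induction A rule: infinite_finite_induct) (auto intro: hom_add)
lemma hom_mon: "hom (nodd u) (mon u)"
  by (simp add: hom_def mon_def)
lemma hom_sig[simp]: "hom 1 (sig a)"
  using hom_mon[of "[Odd a]"] by (simp add: sig_def)
lemma hom_sig2[simp]: "hom 0 (sig2 a b)"
  using hom_mon[of "[Even a b]"] by (simp add: sig2_def)

lemma hom_fmul: assumes "hom k x" "hom l y" shows "hom (k + l) (fmul x y)"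
  unfolding hom_def
proof (intro allI impI)
  fix w assume "fmul x y w \<noteq> 0"
  then obtain i where "x (take i w) * y (drop i w) \<noteq> 0"
    unfolding fmul_def by (meson sum.neutral)
  then have "odd (nodd (take i w)) = odd k" "odd (nodd (drop i w)) = odd l"
    using assms by (auto simp: hom_def)
  moreover have "nodd w = nodd (take i w) + nodd (drop i w)"
    by (metis append_take_drop_id nodd_append)
  ultimately show "odd (nodd w) = odd (k + l)" by auto
qed

lemma even_part_hom: "hom k x \<Longrightarrow> even_part x = (if even k then x else 0)"
  by (auto simp: even_part_def hom_def odd_word_nodd fun_eq_iff fapp)
lemma odd_part_hom: "hom k x \<Longrightarrow> odd_part x = (if odd k then x else 0)"
  by (auto simp: odd_part_def hom_def odd_word_nodd fun_eq_iff fapp)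

lemma act_odd_hom: "hom k x \<Longrightarrow> act_odd a x = fmul (sig a) x + fscale ((-1)^k) (fmul x (sig a))"
  by (auto simp: act_odd_def even_part_hom odd_part_hom acomm_def comm_def fscale_neg1)

lemma lin_act_odd: "lin (act_odd a)"
proof (rule linI)
  have e: "even_part (x + y) = even_part x + even_part y" "odd_part (x + y) = odd_part x + odd_part y" for x y
    by (auto simp: even_part_def odd_part_def fun_eq_iff fapp)
  have s: "even_part (fscale c x) = fscale c (even_part x)" "odd_part (fscale c x) = fscale c (odd_part x)" for c x
    by (auto simp: even_part_def odd_part_def fun_eq_iff fscale_def)
  show "act_odd a (x + y) = act_odd a x + act_odd a y" for x y
    by (simp add: act_odd_def e acomm_def comm_def fmul_lin algebra_simps)
  show "act_odd a (fscale c x) = fscale c (act_odd a x)" for c x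
    by (simp add: act_odd_def s acomm_def comm_def fmul_lin fscale_add_right fscale_diff)
qed

lemma lin_act_even: "lin (act_even a b)"
  by (rule linI) (simp_all add: act_even_def comm_def fmul_lin algebra_simps fscale_diff)

lemma act_even_eq: "act_even a b x = fmul (sig2 a b) x - fmul x (sig2 a b)"
  by (simp add: act_even_def comm_def)

lemma rels_hom: "r \<in> rels n \<Longrightarrow> \<exists>k. hom k r"
proof -
  have c1: "hom 1 (comm (sig a) (sig2 b c))" for a b c
    unfolding comm_def by (rule hom_diff) (use hom_fmul[OF hom_sig hom_sig2] hom_fmul[OF hom_sig2 hom_sig] in auto)
  have c2: "hom 0 (comm (sig2 a b) (sig2 c d))" for a b c d
    unfolding comm_def by (rule hom_diff) (use hom_fmul[OF hom_sig2 hom_sig2] in auto)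
  have c3: "hom 0 (acomm (sig a) (sig b))" for a b
    unfolding acomm_def by (rule hom_add) (use hom_fmul[OF hom_sig hom_sig, THEN hom_cong, of 0] in auto)
  have h1: "hom 0 (sig2 a b - sig2 b a)" for a b by (intro hom_diff hom_sig2)
  have h2: "hom 0 (acomm (sig a) (sig b) - sig2 a b)" for a b by (intro hom_diff hom_sig2 c3)
  have h3: "hom 1 (comm (sig a) (sig2 b c) + fscale x (sig c) + fscale y (sig b))" for a b c x y
    by (intro hom_add hom_scale hom_sig c1)
  have h4: "hom 0 (comm (sig2 a b) (sig2 c d) + fscale x1 (sig2 b d) + fscale x2 (sig2 b c)
         + fscale x3 (sig2 a d) + fscale x4 (sig2 a c))" for a b c d x1 x2 x3 x4
    by (intro hom_add hom_scale hom_sig2 c2)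
  assume "r \<in> rels n"
  then show ?thesis
    unfolding rels_def using h1 h2 h3 h4 by blast
qed

lemma Igens_hom: "x \<in> Igens n \<Longrightarrow> \<exists>k. hom k x"
  unfolding Igens_def using rels_hom hom_fmul hom_mon by blast

lemma I_act_odd: assumes "i \<in> Iideal n" shows "act_odd a i \<in> Iideal n"
proof -
  have "i \<in> fa.span (Igens n)" using assms by (simp add: Iideal_span)
  then show ?thesis
proof (rule lin_span[OF lin_act_odd I_subspace, rotated])
  fix x assume x: "x \<in> Igens n"
  then obtain k where "hom k x" using Igens_hom by blast
  moreover have "x \<in> Iideal n" using x by (simp add: Iideal_span fa.span_base)
  ultimately show "act_odd a x \<in> Iideal n"
    by (simp add: act_odd_hom I_add I_scale I_left I_right)
qed
qed

lemma I_act_even: assumes "i \<in> Iideal n" shows "act_even a b i \<in> Iideal n"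
  using assms
  by (simp add: act_even_eq I_diff I_left I_right)

lemma hom_act_odd: assumes "hom k x" shows "hom (Suc k) (act_odd a x)"
proof -
  have "hom (1 + k) (fmul (sig a) x)" by (rule hom_fmul[OF hom_sig assms])
  moreover have "hom (k + 1) (fmul x (sig a))" by (rule hom_fmul[OF assms hom_sig])
  ultimately have "hom (Suc k) (fmul (sig a) x)" "hom (Suc k) (fmul x (sig a))"
    by simp_all
  then show ?thesis
    unfolding act_odd_hom[OF assms] by (intro hom_add hom_scale)
qed

lemma fscale_uminus_left: "fscale (- c) x = - fscale c x"
  by (simp add: fscale_def fun_eq_iff fapp)

lemma act_odd_twice:
  assumes "hom k x"
  shows "act_odd a (act_odd b x) = fmul (fmul (sig a) (sig b)) x + fscale ((-1)^k) (fmul (fmul (sig a) x) (sig b))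
     - fscale ((-1)^k) (fmul (fmul (sig b) x) (sig a)) - fmul x (fmul (sig b) (sig a))"
proof -
  let ?s = "(-1::complex)^k"
  have ss: "?s * ?s = 1" by (metis power_add power_minus1_even mult_2)
  have "act_odd a (act_odd b x) = fmul (sig a) (fmul (sig b) x + fscale ?s (fmul x (sig b)))
     + fscale (- ?s) (fmul (fmul (sig b) x + fscale ?s (fmul x (sig b))) (sig a))"
    using hom_act_odd[OF assms, of b] unfolding act_odd_hom[OF assms] by (simp add: act_odd_hom)
  also have "\<dots> = fmul (sig a) (fmul (sig b) x) + fscale ?s (fmul (sig a) (fmul x (sig b)))
     - fscale ?s (fmul (sig b) (fmul x (sig a))) - fscale (?s * ?s) (fmul x (fmul (sig b) (sig a)))"
    by (simp only: fmul_add_left fmul_add_right fmul_scale_left fmul_scale_right fscale_add_right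
      fscale_fscale fmul_assoc fscale_uminus_left mult_minus_left diff_conv_add_uminus add.assoc)
  also have "\<dots> = fmul (fmul (sig a) (sig b)) x + fscale ((-1)^k) (fmul (fmul (sig a) x) (sig b))
     - fscale ((-1)^k) (fmul (fmul (sig b) x) (sig a)) - fmul x (fmul (sig b) (sig a))"
    by (simp only: ss fscale_one fmul_assoc)
  finally show ?thesis .
qed

lemma anticomm:
  assumes "hom k x" "x \<in> monspan" "a \<in> {1..2*n}" "b \<in> {1..2*n}"
  shows "act_odd a (act_odd b x) + act_odd b (act_odd a x) - act_even a b x \<in> Iideal n"
proof -
  let ?s = "(-1::complex)^k"
  have hb: "hom (k+1) (act_odd b x)" "hom (k+1) (act_odd a x)"
    using hom_act_odd[OF assms(1)] by auto
  define r where "r = acomm (sig a) (sig b) - sig2 a b"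
  have "r \<in> rels n" unfolding r_def rels_def using assms(3,4) by blast
  then have r: "r \<in> Iideal n" by (rule rels_I)
  have ss: "?s * ?s = 1" by (metis power_add power_minus1_even mult_2)
  have "act_odd a (act_odd b x) + act_odd b (act_odd a x) - act_even a b x = fmul r x - fmul x r"
    unfolding act_odd_twice[OF assms(1)] act_even_eq r_def acomm_def
    by (simp only: fmul_add_left fmul_add_right fmul_diff_left fmul_diff_right) (simp add: algebra_simps)
  then show ?thesis
    using r assms(2) by (simp add: I_diff I_left I_right)
qed

definition wordof :: "nat list \<Rightarrow> (nat \<Rightarrow> nat) \<Rightarrow> fa" where
  "wordof as s = mon (map (\<lambda>i. Odd (as ! s i)) [0..<length as])"

lemma asym_wordof: "asym as = (\<Sum>s\<in>{s. s permutes {0..<length as}}. fscale (of_int (sign s)) (wordof as s))"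
  by (simp add: asym_def wordof_def)

lemma sign_perm_compose:
  assumes "s permutes {0..<(n::nat)}" shows "sign (transpose i j \<circ> s) = (if i = j then 1 else -1) * sign s"
proof -
  have "permutation s" by (meson assms finite_atLeastLessThan permutes_imp_permutation)
  then show ?thesis by (simp add: sign_compose[OF permutation_swap_id] sign_swap_id)
qed

lemma fscale_uminus_left': "fscale (- c) x = - fscale c x"
  by (simp add: fscale_def fun_eq_iff fapp)

lemma asym_Nil[simp]: "asym [] = mon []"
  by (simp add: asym_def)

lemma nodd_map_Odd'[simp]: "nodd (map (\<lambda>i. Odd (f i)) xs) = length xs"
  by (induction xs) auto

lemma hom_wordof: "hom (length as) (wordof as s)"
  unfolding wordof_def using hom_mon[of "map (\<lambda>i. Odd (as ! s i)) [0..<length as]"] by simp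

lemma asym_hom: "hom (length as) (asym as)"
  unfolding asym_wordof by (intro hom_sum hom_scale hom_wordof)

lemma asym_monspan[simp]: "asym as \<in> monspan"
  unfolding asym_wordof wordof_def by (intro monspan_sum monspan_scale monspan_mon)

lemma asym_swap:
  assumes "i < length as" "j < length as" "i \<noteq> j"
  shows "asym (as[i := as ! j, j := as ! i]) = - asym as"
proof -
  let ?n = "length as"
  let ?P = "{s. s permutes {0..<?n}}"
  let ?t = "transpose i j"
  have t: "?t permutes {0..<?n}" using assms by (intro permutes_swap_id) auto
  have W: "wordof (as[i := as ! j, j := as ! i]) s = wordof as (?t \<circ> s)" if "s permutes {0..<?n}" for s
  proof -
    have "s k < ?n" if "k < ?n" for k using permutes_in_image[OF \<open>s permutes _\<close>, of k] that by auto
    then show ?thesis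
      unfolding wordof_def using assms
      by (auto simp: nth_list_update transpose_def intro!: arg_cong[where f=mon])
  qed
  have "asym (as[i := as ! j, j := as ! i]) = (\<Sum>s\<in>?P. fscale (of_int (sign s)) (wordof as (?t \<circ> s)))"
    unfolding asym_wordof by (intro sum.cong) (auto simp: W)
  also have "\<dots> = (\<Sum>s\<in>?P. fscale (of_int (sign (?t \<circ> s))) (wordof as (?t \<circ> (?t \<circ> s))))"
    by (rule setum_permutations_compose_left[OF t])
  also have "\<dots> = (\<Sum>s\<in>?P. - fscale (of_int (sign s)) (wordof as s))"
  proof (intro sum.cong refl)
    fix s assume "s \<in> ?P"
    have "?t \<circ> (?t \<circ> s) = s" by (simp add: fun_eq_iff)
    then show "fscale (of_int (sign (?t \<circ> s))) (wordof as (?t \<circ> (?t \<circ> s))) = - fscale (of_int (sign s)) (wordof as s)"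
      using assms \<open>s \<in> ?P\<close> by (simp add: sign_perm_compose fscale_uminus_left')
  qed
  also have "\<dots> = - asym as"
    unfolding asym_wordof by (simp add: sum_negf)
  finally show ?thesis .
qed

lemma asym_repeat:
  assumes "i < length as" "j < length as" "i \<noteq> j" "as ! i = as ! j"
  shows "asym as = 0"
proof -
  have "as[i := as ! j, j := as ! i] = as" using assms by (metis list_update_id)
  then have "asym as = - asym as" using asym_swap[OF assms(1-3)] by simp
  then show ?thesis by (simp add: fun_eq_iff fapp)
qed

lemma asym_not_distinct: "\<not> distinct as \<Longrightarrow> asym as = 0"
  by (metis asym_repeat distinct_conv_nth)

lemma sig_mon: "sig a = mon [Odd a]" by (simp add: sig_def)

lemma mon_snoc: "mon (xs @ [y]) = fmul (mon xs) (mon [y])"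
  by (simp add: fmul_mon_mon)
lemma mon_Cons_Odd: "mon (Odd a # xs) = fmul (sig a) (mon xs)"
  by (simp add: fmul_mon_mon sig_def)

lemma perm_lt: "q permutes {0..<m} \<Longrightarrow> i < m \<Longrightarrow> q i < (m::nat)"
  using permutes_in_image[of q "{0..<m}" i] by auto
lemma perm_out: "q permutes {0..<m} \<Longrightarrow> q m = (m::nat)"
  using permutes_not_in[of q "{0..<m}" m] by auto

lemma wordof_snoc:
  assumes q: "q permutes {0..<m}" and len: "length cs = m" and j: "j \<le> m"
  shows "wordof (cs @ [t]) (transpose m j \<circ> q)
       = fmul (wordof (if j = m then cs else cs[j := t]) q) (sig ((cs @ [t]) ! j))"
proof -
  define cs' where "cs' = (if j = m then cs else cs[j := t])"
  have l': "length cs' = m" using len by (simp add: cs'_def)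
  have e1: "map (\<lambda>i. Odd ((cs @ [t]) ! (transpose m j \<circ> q) i)) [0..<m]
      = map (\<lambda>i. Odd (cs' ! q i)) [0..<m]"
  proof (rule map_cong[OF refl])
    fix i assume "i \<in> set [0..<m]"
    then have qi: "q i < m" using perm_lt[OF q] by auto
    then show "Odd ((cs @ [t]) ! (transpose m j \<circ> q) i) = Odd (cs' ! q i)"
      using len j by (auto simp: cs'_def transpose_def nth_append nth_list_update)
  qed
  have e2: "(transpose m j \<circ> q) m = j" by (simp add: perm_out[OF q])
  have "wordof (cs @ [t]) (transpose m j \<circ> q) = mon (map (\<lambda>i. Odd ((cs @ [t]) ! (transpose m j \<circ> q) i)) [0..<m]
        @ [Odd ((cs @ [t]) ! (transpose m j \<circ> q) m)])"
    unfolding wordof_def by (simp add: len del: o_apply)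
  also have "\<dots> = fmul (wordof cs' q) (sig ((cs @ [t]) ! j))"
    unfolding e1 e2 mon_snoc wordof_def l' sig_mon ..
  finally show ?thesis unfolding cs'_def .
qed

lemma asym_snoc:
  "asym (cs @ [t]) = fmul (asym cs) (sig t) - (\<Sum>j<length cs. fmul (asym (cs[j := t])) (sig (cs ! j)))"
proof -
  define m where "m = length cs"
  let ?F = "\<lambda>s. fscale (of_int (sign s)) (wordof (cs @ [t]) s)"
  let ?P = "\<lambda>A. {s. s permutes A}"
  have P: "{0..<length (cs @ [t])} = insert m {0..<m}" by (auto simp: m_def)
  have "asym (cs @ [t]) = sum ?F (?P (insert m {0..<m}))"
    unfolding asym_wordof P ..
  also have "\<dots> = (\<Sum>j\<in>insert m {0..<m}. \<Sum>q\<in>?P {0..<m}. ?F (transpose m j \<circ> q))"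
    by (rule sum_over_permutations_insert) auto
  also have "\<dots> = (\<Sum>j\<in>insert m {0..<m}. fscale (if j = m then 1 else -1)
        (fmul (asym (if j = m then cs else cs[j := t])) (sig ((cs @ [t]) ! j))))"
  proof (rule sum.cong[OF refl])
    fix j assume j: "j \<in> insert m {0..<m}"
    have "(\<Sum>q\<in>?P {0..<m}. ?F (transpose m j \<circ> q)) = (\<Sum>q\<in>?P {0..<m}. fscale (if j = m then 1 else -1)
        (fmul (fscale (of_int (sign q)) (wordof (if j = m then cs else cs[j := t]) q)) (sig ((cs @ [t]) ! j))))"
    proof (rule sum.cong[OF refl])
      fix q assume "q \<in> ?P {0..<m}"
      then have q: "q permutes {0..<m}" by simp
      show "?F (transpose m j \<circ> q) = fscale (if j = m then 1 else -1)
        (fmul (fscale (of_int (sign q)) (wordof (if j = m then cs else cs[j := t]) q)) (sig ((cs @ [t]) ! j)))"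
      proof -
        have w: "wordof (cs @ [t]) (transpose m j \<circ> q) = fmul (wordof (if j = m then cs else cs[j := t]) q) (sig ((cs @ [t]) ! j))"
          by (rule wordof_snoc[OF q m_def[symmetric]]) (use j in auto)
        show ?thesis by (simp only: w sign_perm_compose[OF q]) (simp add: fmul_scale_left)
      qed
    qed
    also have "\<dots> = fscale (if j = m then 1 else -1)
        (fmul (asym (if j = m then cs else cs[j := t])) (sig ((cs @ [t]) ! j)))"
      by (simp add: asym_wordof fmul_sum_left fscale_sum m_def)
    finally show "(\<Sum>q\<in>?P {0..<m}. ?F (transpose m j \<circ> q)) = fscale (if j = m then 1 else -1)
        (fmul (asym (if j = m then cs else cs[j := t])) (sig ((cs @ [t]) ! j)))" .
  qed
  also have "\<dots> = fmul (asym cs) (sig t) + (\<Sum>j<m. - fmul (asym (cs[j := t])) (sig (cs ! j)))"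
    by (subst sum.insert) (auto simp: m_def nth_append fscale_neg1 atLeast0LessThan intro!: sum.cong)
  finally show ?thesis by (simp add: m_def sum_negf)
qed

lemma bij_Suc: "bij_betw Suc {0..<m} {1..<Suc m}"
  by (rule bij_betwI[where g="\<lambda>i. i - 1"]) auto
lemma bij_pred: "bij_betw (\<lambda>i. i - 1) {1..<Suc m} {0..<m}"
  by (rule bij_betwI[where g="Suc"]) auto

lemma sum_perm_shift:
  "sum H {q. q permutes {1..<Suc m}} = sum (\<lambda>q'. H (map_permutation {0..<m} Suc q')) {q. q permutes {0..<m}}"
proof (rule sum.reindex_bij_witness[where i="map_permutation {0..<m} Suc" and j="map_permutation {1..<Suc m} (\<lambda>i. i - 1)"])
  fix a assume "a \<in> {q. q permutes {1..<Suc m}}"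
  then have a: "a permutes {1..<Suc m}" by simp
  show "map_permutation {0..<m} Suc (map_permutation {1..<Suc m} (\<lambda>i. i - 1) a) = a"
    by (rule map_permutation_compose_inv[OF bij_pred a]) auto
  show "map_permutation {1..<Suc m} (\<lambda>i. i - 1) a \<in> {q. q permutes {0..<m}}"
    using map_permutation_permutes[OF bij_pred a] by simp
  have "map_permutation {0..<m} Suc (map_permutation {1..<Suc m} (\<lambda>i. i - 1) a) = a"
    by (rule map_permutation_compose_inv[OF bij_pred a]) auto
  then show "H (map_permutation {0..<m} Suc (map_permutation {1..<Suc m} (\<lambda>i. i - 1) a)) = H a"
    by simp
next
  fix b assume "b \<in> {q. q permutes {0..<m}}"
  then have b: "b permutes {0..<m}" by simp
  show "map_permutation {1..<Suc m} (\<lambda>i. i - 1) (map_permutation {0..<m} Suc b) = b"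
    by (rule map_permutation_compose_inv[OF bij_Suc b]) auto
  show "map_permutation {0..<m} Suc b \<in> {q. q permutes {1..<Suc m}}"
    using map_permutation_permutes[OF bij_Suc b] by simp
qed

lemma wordof_cons:
  assumes q: "q permutes {0..<m}" and len: "length cs = m" and j: "j \<le> m"
  shows "wordof (c # cs) (transpose 0 j \<circ> map_permutation {0..<m} Suc q)
       = fmul (sig ((c # cs) ! j)) (wordof (if j = 0 then cs else cs[j - 1 := c]) q)"
proof -
  define cs' where "cs' = (if j = 0 then cs else cs[j - 1 := c])"
  define Q where "Q = map_permutation {0..<m} Suc q"
  have l': "length cs' = m" using len by (simp add: cs'_def)
  have "Q permutes {1..<Suc m}" unfolding Q_def by (rule map_permutation_permutes[OF bij_Suc q])
  then have Q0: "Q 0 = 0" by (rule permutes_not_in) simp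
  have QS: "Q (Suc i) = Suc (q i)" if "i < m" for i
    unfolding Q_def by (rule map_permutation_apply) (use that in auto)
  have e1: "map (\<lambda>i. Odd ((c # cs) ! (transpose 0 j \<circ> Q) (Suc i))) [0..<m]
      = map (\<lambda>i. Odd (cs' ! q i)) [0..<m]"
  proof (rule map_cong[OF refl])
    fix i assume "i \<in> set [0..<m]"
    then have qi: "q i < m" "i < m" using perm_lt[OF q] by auto
    have "(c # cs) ! (transpose 0 j (Suc (q i))) = cs' ! q i"
    proof (cases j)
      case 0 then show ?thesis by (simp add: cs'_def)
    next
      case (Suc j') then show ?thesis
        using qi len j by (simp add: cs'_def transpose_def nth_list_update)
    qed
    then show "Odd ((c # cs) ! (transpose 0 j \<circ> Q) (Suc i)) = Odd (cs' ! q i)"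
      using QS[OF qi(2)] by simp
  qed
  have e2: "(transpose 0 j \<circ> Q) 0 = j" by (simp add: Q0)
  have u: "[0..<Suc m] = 0 # map Suc [0..<m]" by (simp add: map_Suc_upt upt_conv_Cons)
  have "wordof (c # cs) (transpose 0 j \<circ> Q) = mon (Odd ((c # cs) ! (transpose 0 j \<circ> Q) 0) #
        map (\<lambda>i. Odd ((c # cs) ! (transpose 0 j \<circ> Q) (Suc i))) [0..<m])"
    unfolding wordof_def by (simp only: u len length_Cons list.map map_map o_def)
  also have "\<dots> = fmul (sig ((c # cs) ! j)) (wordof cs' q)"
    unfolding e1 e2 mon_Cons_Odd wordof_def l' ..
  finally show ?thesis unfolding cs'_def Q_def .
qed

lemma asym_Cons:
  "asym (c # cs) = fmul (sig c) (asym cs) - (\<Sum>j<length cs. fmul (sig (cs ! j)) (asym (cs[j := c])))"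
proof -
  define m where "m = length cs"
  let ?F = "\<lambda>s. fscale (of_int (sign s)) (wordof (c # cs) s)"
  let ?P = "\<lambda>A. {s. s permutes A}"
  have P: "{0..<length (c # cs)} = insert 0 {1..<Suc m}" by (auto simp: m_def)
  have "asym (c # cs) = sum ?F (?P (insert 0 {1..<Suc m}))"
    unfolding asym_wordof P ..
  also have "\<dots> = (\<Sum>j\<in>insert 0 {1..<Suc m}. \<Sum>q\<in>?P {1..<Suc m}. ?F (transpose 0 j \<circ> q))"
    by (rule sum_over_permutations_insert) auto
  also have "\<dots> = (\<Sum>j\<in>insert 0 {1..<Suc m}. \<Sum>q\<in>?P {0..<m}. ?F (transpose 0 j \<circ> map_permutation {0..<m} Suc q))"
    by (simp only: sum_perm_shift)
  also have "\<dots> = (\<Sum>j\<in>insert 0 {1..<Suc m}. fscale (if j = 0 then 1 else -1)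
        (fmul (sig ((c # cs) ! j)) (asym (if j = 0 then cs else cs[j - 1 := c]))))"
  proof (rule sum.cong[OF refl])
    fix j assume j: "j \<in> insert 0 {1..<Suc m}"
    have "(\<Sum>q\<in>?P {0..<m}. ?F (transpose 0 j \<circ> map_permutation {0..<m} Suc q)) = (\<Sum>q\<in>?P {0..<m}. fscale (if j = 0 then 1 else -1)
        (fmul (sig ((c # cs) ! j)) (fscale (of_int (sign q)) (wordof (if j = 0 then cs else cs[j - 1 := c]) q))))"
    proof (rule sum.cong[OF refl])
      fix q assume "q \<in> ?P {0..<m}"
      then have q: "q permutes {0..<m}" by simp
      have Qp: "map_permutation {0..<m} Suc q permutes {1..<Suc m}"
        by (rule map_permutation_permutes[OF bij_Suc q])
      have sQ: "sign (map_permutation {0..<m} Suc q) = sign q"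
        by (rule sign_map_permutation[OF _ q]) auto
      have w: "wordof (c # cs) (transpose 0 j \<circ> map_permutation {0..<m} Suc q) = fmul (sig ((c # cs) ! j)) (wordof (if j = 0 then cs else cs[j - 1 := c]) q)"
        by (rule wordof_cons[OF q m_def[symmetric]]) (use j in auto)
      have sg: "sign (transpose 0 j \<circ> map_permutation {0..<m} Suc q) = (if 0 = j then 1 else -1) * sign q"
        using sign_perm_compose[OF permutes_subset[OF Qp, of "{0..<Suc m}"], of 0 j] sQ by auto
      show "?F (transpose 0 j \<circ> map_permutation {0..<m} Suc q) = fscale (if j = 0 then 1 else -1)
        (fmul (sig ((c # cs) ! j)) (fscale (of_int (sign q)) (wordof (if j = 0 then cs else cs[j - 1 := c]) q)))"
        by (simp only: w sg) (auto simp: fmul_scale_right)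
    qed
    also have "\<dots> = fscale (if j = 0 then 1 else -1)
        (fmul (sig ((c # cs) ! j)) (asym (if j = 0 then cs else cs[j - 1 := c])))"
      by (simp add: asym_wordof fmul_sum_right fscale_sum m_def)
    finally show "(\<Sum>q\<in>?P {0..<m}. ?F (transpose 0 j \<circ> map_permutation {0..<m} Suc q)) = fscale (if j = 0 then 1 else -1)
        (fmul (sig ((c # cs) ! j)) (asym (if j = 0 then cs else cs[j - 1 := c])))" .
  qed
  also have "\<dots> = fmul (sig c) (asym cs) + (\<Sum>j\<in>{1..<Suc m}. - fmul (sig ((c # cs) ! j)) (asym (cs[j - 1 := c])))"
    by (subst sum.insert) (auto simp: fscale_neg1 intro!: sum.cong)
  also have "(\<Sum>j\<in>{1..<Suc m}. - fmul (sig ((c # cs) ! j)) (asym (cs[j - 1 := c])))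
      = (\<Sum>j\<in>{0..<m}. - fmul (sig (cs ! j)) (asym (cs[j := c])))"
    using sum.shift_bounds_Suc_ivl[of "\<lambda>j. - fmul (sig ((c # cs) ! j)) (asym (cs[j - 1 := c]))" 0 m] by simp
  finally show ?thesis by (simp add: m_def sum_negf atLeast0LessThan)
qed

lemma asym_adj: "asym (pre @ y # x # ys) = - asym (pre @ x # y # ys)"
proof -
  let ?as = "pre @ x # y # ys"
  have "?as[length pre := ?as ! Suc (length pre), Suc (length pre) := ?as ! length pre] = pre @ y # x # ys"
    by (simp add: list_update_append nth_append)
  then show ?thesis using asym_swap[of "length pre" ?as "Suc (length pre)"] by simp
qed

lemma asym_move: "asym (pre @ xs @ c # ys) = fscale ((-1)^length xs) (asym (pre @ c # xs @ ys))"
proof (induction xs arbitrary: ys rule: rev_induct)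
  case Nil then show ?case by simp
next
  case (snoc x xs)
  have "asym (pre @ (xs @ [x]) @ c # ys) = asym ((pre @ xs) @ x # c # ys)" by simp
  also have "\<dots> = - asym ((pre @ xs) @ c # x # ys)" by (rule asym_adj)
  also have "asym ((pre @ xs) @ c # x # ys) = asym (pre @ xs @ c # (x # ys))" by simp
  also have "\<dots> = fscale ((-1)^length xs) (asym (pre @ c # xs @ x # ys))" by (rule snoc.IH)
  finally show ?case by (simp add: fscale_uminus_left')
qed

lemma asym_rot: "asym (cs @ [c]) = fscale ((-1)^length cs) (asym (c # cs))"
  using asym_move[of "[]" cs c "[]"] by simp

lemma act_odd_asym: "act_odd e (asym Z) = fmul (sig e) (asym Z) + fscale ((-1)^length Z) (fmul (asym Z) (sig e))"
  by (rule act_odd_hom[OF asym_hom])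

lemma star_identity:
  "fscale 2 (asym (c # cs)) = act_odd c (asym cs) - (\<Sum>j<length cs. act_odd (cs ! j) (asym (cs[j := c])))"
proof -
  let ?s = "(-1::complex)^length cs"
  have ss: "?s * ?s = 1" by (metis power_add power_minus1_even mult_2)
  have "act_odd c (asym cs) - (\<Sum>j<length cs. act_odd (cs ! j) (asym (cs[j := c])))
     = (fmul (sig c) (asym cs) - (\<Sum>j<length cs. fmul (sig (cs ! j)) (asym (cs[j := c]))))
     + fscale ?s (fmul (asym cs) (sig c) - (\<Sum>j<length cs. fmul (asym (cs[j := c])) (sig (cs ! j))))"
    by (simp add: act_odd_asym sum.distrib fscale_diff fscale_sum algebra_simps)
  also have "\<dots> = asym (c # cs) + fscale ?s (asym (cs @ [c]))"
    by (simp only: asym_Cons asym_snoc)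
  also have "\<dots> = fscale 2 (asym (c # cs))"
    using fscale_add_left[of 1 1 "asym (c # cs)"] by (simp add: asym_rot ss)
  finally show ?thesis ..
qed

lemma rel_even_odd:
  assumes "d \<in> {1..2*n}" "b \<in> {1..2*n}" "c \<in> {1..2*n}"
  shows "act_even b c (sig d) - (fscale (g n d b) (sig c) + fscale (g n d c) (sig b)) \<in> Iideal n"
proof -
  have r: "comm (sig d) (sig2 b c) + fscale (g n d b) (sig c) + fscale (g n d c) (sig b) \<in> rels n"
    unfolding rels_def using assms by blast
  have eq: "act_even b c (sig d) - (fscale (g n d b) (sig c) + fscale (g n d c) (sig b))
      = - (comm (sig d) (sig2 b c) + fscale (g n d b) (sig c) + fscale (g n d c) (sig b))"
    by (simp add: act_even_def comm_def algebra_simps)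
  show ?thesis unfolding eq by (rule I_neg[OF rels_I[OF r]])
qed

lemma comm_fmul: "act_even b c (fmul x y) = fmul (act_even b c x) y + fmul x (act_even b c y)"
  by (simp add: act_even_def comm_def fmul_lin fmul_assoc algebra_simps)

definition Tsum :: "nat \<Rightarrow> nat \<Rightarrow> nat \<Rightarrow> nat list \<Rightarrow> fa" where
  "Tsum n b c ds = (\<Sum>i<length ds. fscale (g n (ds ! i) b) (mon (map Odd (ds[i := c])))
                          + fscale (g n (ds ! i) c) (mon (map Odd (ds[i := b]))))"

lemma act_even_word:
  assumes "set ds \<subseteq> {1..2*n}" "b \<in> {1..2*n}" "c \<in> {1..2*n}"
  shows "act_even b c (mon (map Odd ds)) - Tsum n b c ds \<in> Iideal n"
  using assms(1)
proof (induction ds)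
  case Nil
  then show ?case by (simp add: Tsum_def act_even_def comm_def I_zero)
next
  case (Cons d ds)
  let ?M = "mon (map Odd ds)"
  let ?R = "fscale (g n d b) (sig c) + fscale (g n d c) (sig b)"
  have d: "d \<in> {1..2*n}" and ds: "set ds \<subseteq> {1..2*n}" using Cons.prems by auto
  have m: "mon (map Odd (d # ds)) = fmul (sig d) ?M" by (simp add: mon_Cons_Odd)
  have T: "Tsum n b c (d # ds) = fmul ?R ?M + fmul (sig d) (Tsum n b c ds)"
    unfolding Tsum_def length_Cons sum.lessThan_Suc_shift
    by (simp add: fmul_lin mon_Cons_Odd fscale_add_right sum.distrib del: sum.lessThan_Suc)
  have "act_even b c (mon (map Odd (d # ds))) - Tsum n b c (d # ds)
      = fmul (act_even b c (sig d) - ?R) ?M + fmul (sig d) (act_even b c ?M - Tsum n b c ds)"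
    unfolding m T comm_fmul by (simp add: fmul_diff_left fmul_diff_right)
  moreover have "fmul (act_even b c (sig d) - ?R) ?M \<in> Iideal n"
    by (rule I_right[OF monspan_mon rel_even_odd[OF d assms(2,3)]])
  moreover have "fmul (sig d) (act_even b c ?M - Tsum n b c ds) \<in> Iideal n"
    by (rule I_left[OF monspan_sig(1) Cons.IH[OF ds]])
  ultimately show ?case by (simp add: I_add)
qed

definition Esum :: "nat \<Rightarrow> nat \<Rightarrow> nat \<Rightarrow> nat list \<Rightarrow> fa" where
  "Esum n b c as = (\<Sum>m<length as. fscale (g n (as ! m) b) (asym (as[m := c]))
                          + fscale (g n (as ! m) c) (asym (as[m := b])))"

lemma ds_update:
  assumes s: "s permutes {0..<N}" and i: "i < N" and len: "length as = N"
  shows "(map (\<lambda>k. as ! s k) [0..<N])[i := x] = map (\<lambda>k. (as[s i := x]) ! s k) [0..<N]"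
proof (rule nth_equalityI)
  show "length ((map (\<lambda>k. as ! s k) [0..<N])[i := x]) = length (map (\<lambda>k. (as[s i := x]) ! s k) [0..<N])"
    by simp
  fix k assume "k < length ((map (\<lambda>k. as ! s k) [0..<N])[i := x])"
  then have k: "k < N" by simp
  have "s k = s i \<longleftrightarrow> k = i" using permutes_inj[OF s] by (auto dest: injD)
  moreover have "s i < N" using perm_lt[OF s i] .
  ultimately show "(map (\<lambda>k. as ! s k) [0..<N])[i := x] ! k = map (\<lambda>k. (as[s i := x]) ! s k) [0..<N] ! k"
    using k i len by (auto simp: nth_list_update)
qed

lemma Tsum_perm:
  assumes s: "s permutes {0..<length as}"
  shows "Tsum n b c (map (\<lambda>k. as ! s k) [0..<length as])
     = (\<Sum>m<length as. fscale (g n (as ! m) b) (wordof (as[m := c]) s)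
                          + fscale (g n (as ! m) c) (wordof (as[m := b]) s))"
proof -
  let ?N = "length as"
  let ?G = "\<lambda>m. fscale (g n (as ! m) b) (wordof (as[m := c]) s) + fscale (g n (as ! m) c) (wordof (as[m := b]) s)"
  have "Tsum n b c (map (\<lambda>k. as ! s k) [0..<?N]) = (\<Sum>i<?N. ?G (s i))"
    unfolding Tsum_def
    by (rule sum.cong) (auto simp: ds_update[OF s _ refl] wordof_def comp_def)
  also have "\<dots> = (\<Sum>m<?N. ?G m)"
    using sum.permute[OF s, of ?G] by (simp add: atLeast0LessThan comp_def)
  finally show ?thesis .
qed

lemma act_even_asym:
  assumes "set as \<subseteq> {1..2*n}" "b \<in> {1..2*n}" "c \<in> {1..2*n}"
  shows "act_even b c (asym as) - Esum n b c as \<in> Iideal n"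
proof -
  let ?N = "length as"
  let ?P = "{s. s permutes {0..<?N}}"
  let ?ds = "\<lambda>s. map (\<lambda>k. as ! s k) [0..<?N]"
  have w: "wordof as s = mon (map Odd (?ds s))" for s by (simp add: wordof_def comp_def)
  have "act_even b c (asym as) = (\<Sum>s\<in>?P. fscale (of_int (sign s)) (act_even b c (mon (map Odd (?ds s)))))"
    unfolding asym_wordof by (simp add: lin_sum[OF lin_act_even] lin_scale[OF lin_act_even] w)
  moreover have "Esum n b c as = (\<Sum>s\<in>?P. fscale (of_int (sign s)) (Tsum n b c (?ds s)))"
  proof -
    have "(\<Sum>s\<in>?P. fscale (of_int (sign s)) (Tsum n b c (?ds s)))
        = (\<Sum>s\<in>?P. \<Sum>m<?N. fscale (g n (as ! m) b) (fscale (of_int (sign s)) (wordof (as[m := c]) s))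
                          + fscale (g n (as ! m) c) (fscale (of_int (sign s)) (wordof (as[m := b]) s)))"
      by (intro sum.cong refl) (simp add: Tsum_perm fscale_sum fscale_add_right mult.commute)
    also have "\<dots> = Esum n b c as"
      unfolding Esum_def by (subst sum.swap) (simp add: asym_wordof sum.distrib fscale_sum)
    finally show ?thesis ..
  qed
  moreover have "(\<Sum>s\<in>?P. fscale (of_int (sign s)) (act_even b c (mon (map Odd (?ds s)))))
     - (\<Sum>s\<in>?P. fscale (of_int (sign s)) (Tsum n b c (?ds s))) \<in> Iideal n"
  proof -
    have "set (?ds s) \<subseteq> {1..2*n}" if "s \<in> ?P" for s
      using that assms(1) perm_lt[of s ?N] by (auto dest!: nth_mem[of _ as] simp: subset_iff)
    then show ?thesis
      by (simp only: sum_subtractf[symmetric] fscale_diff[symmetric])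
         (intro I_sum I_scale act_even_word assms(2,3))
  qed
  ultimately show ?thesis by simp
qed

definition Gs :: "nat \<Rightarrow> nat \<Rightarrow> fa set" where
  "Gs n q = {asym as | as. length as < q \<and> set as \<subseteq> {1..2*n}}"

definition W :: "nat \<Rightarrow> nat \<Rightarrow> fa set" where
  "W n q = fa.span (Gs n q \<union> Igens n)"

lemma W_sub: "fa.subspace (W n q)" by (simp add: W_def)
lemma W_add: "x \<in> W n q \<Longrightarrow> y \<in> W n q \<Longrightarrow> x + y \<in> W n q" by (simp add: W_def fa.span_add)
lemma W_diff: "x \<in> W n q \<Longrightarrow> y \<in> W n q \<Longrightarrow> x - y \<in> W n q" by (simp add: W_def fa.span_diff)
lemma W_scale: "x \<in> W n q \<Longrightarrow> fscale c x \<in> W n q" by (simp add: W_def fa.span_scale)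
lemma W_neg: "x \<in> W n q \<Longrightarrow> - x \<in> W n q" by (simp add: W_def fa.span_neg)
lemma W_zero: "0 \<in> W n q" by (simp add: W_def fa.span_zero)
lemma W_sum: "(\<And>a. a \<in> A \<Longrightarrow> f a \<in> W n q) \<Longrightarrow> sum f A \<in> W n q" by (simp add: W_def fa.span_sum)
lemma I_W: "x \<in> Iideal n \<Longrightarrow> x \<in> W n q"
  unfolding W_def Iideal_span using fa.span_mono[of "Igens n" "Gs n q \<union> Igens n"] by auto
lemma asym_W: "length as < q \<Longrightarrow> set as \<subseteq> {1..2*n} \<Longrightarrow> asym as \<in> W n q"
  unfolding W_def Gs_def by (rule fa.span_base) auto
lemma W_mono: "q \<le> q' \<Longrightarrow> x \<in> W n q \<Longrightarrow> x \<in> W n q'"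
  unfolding W_def Gs_def
  by (rule set_mp[OF fa.span_mono]) auto

lemma W_cases: "x \<in> W n q \<Longrightarrow> lin f \<Longrightarrow> fa.subspace V \<Longrightarrow>
   (\<And>as. length as < q \<Longrightarrow> set as \<subseteq> {1..2*n} \<Longrightarrow> f (asym as) \<in> V) \<Longrightarrow>
   (\<And>i. i \<in> Iideal n \<Longrightarrow> f i \<in> V) \<Longrightarrow> f x \<in> V"
  unfolding W_def
  by (erule lin_span[rotated 3]) (auto simp: Gs_def Iideal_span intro: fa.span_base)

lemma ad_asym_W:
  assumes "set as \<subseteq> {1..2*n}" "length as < q" "b \<in> {1..2*n}" "c \<in> {1..2*n}"
  shows "act_even b c (asym as) \<in> W n q"
proof -
  have "Esum n b c as \<in> W n q"
    unfolding Esum_def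
    using assms by (intro W_sum W_add W_scale asym_W) (auto dest!: set_mp[OF set_update_subset_insert])
  moreover have "act_even b c (asym as) - Esum n b c as \<in> W n q"
    by (rule I_W[OF act_even_asym[OF assms(1,3,4)]])
  ultimately show ?thesis using W_add by fastforce
qed

definition Cp :: "nat \<Rightarrow> nat \<Rightarrow> bool" where
  "Cp n p \<longleftrightarrow> (\<forall>a as. a \<in> {1..2*n} \<longrightarrow> set as \<subseteq> {1..2*n} \<longrightarrow> length as = p \<longrightarrow>
      act_odd a (asym as) - fscale (2 / (of_nat p + 1)) (asym (a # as)) \<in> W n p)"

lemma S_W:
  assumes IH: "\<And>r. r < q \<Longrightarrow> Cp n r" and x: "x \<in> W n q" and a: "a \<in> {1..2*n}"
  shows "act_odd a x \<in> W n (Suc q)"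
  using x lin_act_odd W_sub
proof (rule W_cases)
  fix as assume l: "length as < q" and s: "set as \<subseteq> {1..2*n}"
  have "act_odd a (asym as) - fscale (2 / (of_nat (length as) + 1)) (asym (a # as)) \<in> W n (length as)"
    using IH[OF l] a s unfolding Cp_def by blast
  then have "act_odd a (asym as) - fscale (2 / (of_nat (length as) + 1)) (asym (a # as)) \<in> W n (Suc q)"
    by (rule W_mono[rotated]) (use l in simp)
  moreover have "fscale (2 / (of_nat (length as) + 1)) (asym (a # as)) \<in> W n (Suc q)"
    using l s a by (intro W_scale asym_W) auto
  ultimately show "act_odd a (asym as) \<in> W n (Suc q)" using W_add by fastforce
next
  fix i assume "i \<in> Iideal n"
  then show "act_odd a i \<in> W n (Suc q)" by (intro I_W I_act_odd)
qed

lemma KEY: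
  assumes Cm: "Cp n m" and IH: "\<And>r. r < m \<Longrightarrow> Cp n r"
    and a: "a \<in> {1..2*n}" and e: "e \<in> {1..2*n}" and Z: "set Z \<subseteq> {1..2*n}" "length Z = m"
  shows "act_odd a (act_odd e (asym Z)) + fscale (2 / (of_nat m + 1)) (act_odd e (asym (a # Z))) \<in> W n (Suc m)"
proof -
  let ?X = "asym Z"
  let ?k = "(2::complex) / (of_nat m + 1)"
  define AC where "AC = act_odd a (act_odd e ?X) + act_odd e (act_odd a ?X) - act_even a e ?X"
  have AC: "AC \<in> W n (Suc m)" unfolding AC_def
    by (rule I_W, rule anticomm[OF asym_hom asym_monspan a e])
  define rem where "rem = act_odd a ?X - fscale ?k (asym (a # Z))"
  have rem: "rem \<in> W n m" using Cm a Z unfolding Cp_def rem_def by blast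
  have rem': "act_odd e rem \<in> W n (Suc m)" by (rule S_W[OF IH rem e])
  have ad: "act_even a e ?X \<in> W n (Suc m)" using Z a e by (intro ad_asym_W) auto
  have eq: "act_odd e (act_odd a ?X) = fscale ?k (act_odd e (asym (a # Z))) + act_odd e rem"
    unfolding rem_def by (simp add: lin_diff[OF lin_act_odd] lin_scale[OF lin_act_odd])
  have "act_odd a (act_odd e ?X) + fscale ?k (act_odd e (asym (a # Z))) = AC + act_even a e ?X - act_odd e rem"
    unfolding AC_def eq by (simp add: algebra_simps)
  then show ?thesis using AC ad rem' by (simp add: W_add W_diff)
qed

lemma asym_single: "asym [a] = sig a"
  using asym_Cons[of a "[]"] by simp

lemma C_zero: "Cp n 0"
  unfolding Cp_def
proof (intro allI impI)
  fix a and as :: "nat list" assume "a \<in> {1..2*n}" "set as \<subseteq> {1..2*n}" "length as = 0"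
  then have as: "as = []" by simp
  have "act_odd a (asym as) = sig a + sig a"
    unfolding as act_odd_hom[OF asym_hom] by simp
  moreover have "fscale (2 / (of_nat 0 + 1)) (asym (a # as)) = sig a + sig a"
    using fscale_add_left[of 1 1 "sig a"] by (simp add: as asym_single)
  ultimately show "act_odd a (asym as) - fscale (2 / (of_nat 0 + 1)) (asym (a # as)) \<in> W n 0"
    by (simp add: W_zero)
qed

lemma swap_front:
  assumes "j < length cs"
  shows "asym (c # cs[j := a]) = - asym (a # cs[j := c])"
proof -
  let ?as = "a # cs[j := c]"
  have "?as[0 := ?as ! Suc j, Suc j := ?as ! 0] = c # cs[j := a]"
    using assms by simp
  then show ?thesis using asym_swap[of 0 ?as "Suc j"] assms by simp
qed

lemma alg_id:
  fixes u z q r :: complex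
  assumes q: "q \<noteq> 0" and r: "r \<noteq> 0" and qr: "q = r + 1"
  shows "u - 2 / q * ((u - z) / 2) = r / (2 * q) * (2 * u + 2 / r * z)"
proof -
  have "u - 2 / q * ((u - z) / 2) = (q * u - u + z) / q" using q by (simp add: field_simps)
  also have "\<dots> = (r * u + z) / q" using qr by (simp add: algebra_simps)
  also have "r / (2 * q) * (2 * u + 2 / r * z) = (r * u + z) / q" using q r by (simp add: field_simps)
  ultimately show ?thesis by simp
qed

lemma C_step:
  assumes IH: "\<And>r. r < p \<Longrightarrow> Cp n r" and p: "0 < p"
  shows "Cp n p"
  unfolding Cp_def
proof (intro allI impI)
  fix a and as :: "nat list"
  assume a: "a \<in> {1..2*n}" and s: "set as \<subseteq> {1..2*n}" and l: "length as = p"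
  obtain c cs where as: "as = c # cs" using l p by (cases as) auto
  define m where "m = length cs"
  have pm: "p = Suc m" using l as m_def by simp
  have c: "c \<in> {1..2*n}" and cs: "set cs \<subseteq> {1..2*n}" using s as by auto
  have Cm: "Cp n m" using IH pm by simp
  have IH': "\<And>r. r < m \<Longrightarrow> Cp n r" using IH pm by simp
  let ?k = "(2::complex) / (of_nat m + 1)"
  define K where "K e Z = act_odd a (act_odd e (asym Z)) + fscale ?k (act_odd e (asym (a # Z)))" for e Z
  define U where "U = act_odd a (asym (c # cs))"
  define Zt where "Zt = act_odd c (asym (a # cs)) - (\<Sum>j<m. act_odd (cs ! j) (asym (a # cs[j := c])))"
  define A where "A = asym (a # c # cs)"
  have h1: "fscale 2 U + fscale ?k Zt = K c cs - (\<Sum>j<m. K (cs ! j) (cs[j := c]))"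
  proof -
    have "fscale 2 U = act_odd a (act_odd c (asym cs)) - (\<Sum>j<m. act_odd a (act_odd (cs ! j) (asym (cs[j := c]))))"
      unfolding U_def lin_scale[OF lin_act_odd, symmetric] star_identity
      by (simp add: lin_diff[OF lin_act_odd] lin_sum[OF lin_act_odd] m_def)
    moreover have "K c cs - (\<Sum>j<m. K (cs ! j) (cs[j := c])) = (act_odd a (act_odd c (asym cs)) - (\<Sum>j<m. act_odd a (act_odd (cs ! j) (asym (cs[j := c])))))
        + (fscale ?k (act_odd c (asym (a # cs))) - (\<Sum>j<m. fscale ?k (act_odd (cs ! j) (asym (a # cs[j := c])))))"
      unfolding K_def sum.distrib by (rule add_diff_add)
    moreover have "fscale ?k Zt = fscale ?k (act_odd c (asym (a # cs))) - (\<Sum>j<m. fscale ?k (act_odd (cs ! j) (asym (a # cs[j := c]))))"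
      unfolding Zt_def fscale_diff fscale_sum ..
    ultimately show ?thesis by simp
  qed
  have Kin: "K e Z \<in> W n (Suc m)" if "e \<in> {1..2*n}" "set Z \<subseteq> {1..2*n}" "length Z = m" for e Z
    unfolding K_def by (rule KEY[OF Cm IH' a that])
  have h1W: "fscale 2 U + fscale ?k Zt \<in> W n (Suc m)"
    unfolding h1
  proof (rule W_diff)
    show "K c cs \<in> W n (Suc m)" using Kin c cs m_def by simp
    show "(\<Sum>j<m. K (cs ! j) (cs[j := c])) \<in> W n (Suc m)"
    proof (rule W_sum)
      fix j assume "j \<in> {..<m}"
      then have j: "j < length cs" by (simp add: m_def)
      have "set (cs[j := c]) \<subseteq> {1..2*n}" using cs c set_update_subset_insert[of cs j c] by auto
      moreover have "cs ! j \<in> {1..2*n}" using cs j nth_mem by blast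
      ultimately show "K (cs ! j) (cs[j := c]) \<in> W n (Suc m)" using Kin j m_def by simp
    qed
  qed
  have h2: "fscale 2 A = U - Zt"
  proof -
    have "fscale 2 A = act_odd a (asym (c # cs)) - (\<Sum>j<Suc m. act_odd ((c # cs) ! j) (asym ((c # cs)[j := a])))"
      unfolding A_def star_identity by (simp only: length_Cons m_def)
    also have "(\<Sum>j<Suc m. act_odd ((c # cs) ! j) (asym ((c # cs)[j := a])))
        = act_odd c (asym (a # cs)) + (\<Sum>j<m. act_odd (cs ! j) (asym (c # cs[j := a])))"
      by (simp only: sum.lessThan_Suc_shift) (simp del: sum.lessThan_Suc)
    also have "(\<Sum>j<m. act_odd (cs ! j) (asym (c # cs[j := a]))) = (\<Sum>j<m. - act_odd (cs ! j) (asym (a # cs[j := c])))"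
    proof (intro sum.cong refl)
      fix j assume "j \<in> {..<m}"
      then have j: "j < length cs" by (simp add: m_def)
      show "act_odd (cs ! j) (asym (c # cs[j := a])) = - act_odd (cs ! j) (asym (a # cs[j := c]))"
        unfolding swap_front[OF j, of c a] by (rule lin_neg[OF lin_act_odd])
    qed
    finally show ?thesis unfolding U_def Zt_def by (simp add: sum_negf)
  qed
  have fin: "U - fscale (2 / (of_nat p + 1)) A = fscale (of_nat p / (2 * (of_nat p + 1))) (fscale 2 U + fscale ?k Zt)"
  proof
    fix w
    have hw: "A w = (U w - Zt w) / 2" using fun_cong[OF h2, of w] by (simp add: fscale_def fapp mult.commute)
    have "(of_nat p :: complex) \<noteq> 0" using p by simp
    moreover have "(of_nat p :: complex) + 1 \<noteq> 0" by (metis of_nat_Suc of_nat_neq_0 add.commute)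
    ultimately show "(U - fscale (2 / (of_nat p + 1)) A) w = fscale (of_nat p / (2 * (of_nat p + 1))) (fscale 2 U + fscale ?k Zt) w"
    proof -
      have pe: "(of_nat p :: complex) = of_nat m + 1" using pm by simp
      show ?thesis
        unfolding fscale_def fapp hw pe
        by (rule alg_id) (use \<open>(of_nat p :: complex) \<noteq> 0\<close> \<open>(of_nat p :: complex) + 1 \<noteq> 0\<close> pe in auto)
    qed
  qed
  have "U - fscale (2 / (of_nat p + 1)) A \<in> W n p"
    unfolding fin by (rule W_scale[OF h1W[folded pm]])
  then show "act_odd a (asym as) - fscale (2 / (of_nat p + 1)) (asym (a # as)) \<in> W n p"
    by (simp only: as U_def A_def)
qed

lemma C_all: "Cp n p"
proof (induction p rule: less_induct)
  case (less p)
  show ?case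
  proof (cases "p = 0")
    case True then show ?thesis by (simp add: C_zero)
  next
    case False then show ?thesis using C_step less by blast
  qed
qed

lemma Omega_W: "Omega n = fa.span (Gs n (Suc (2*n)))"
proof -
  have "{asym as | as. length as \<le> 2*n \<and> set as \<subseteq> {1..2*n}} = Gs n (Suc (2*n))"
    unfolding Gs_def by (auto simp: less_Suc_eq_le)
  then show ?thesis unfolding Omega_def fspan_eq by simp
qed

lemma W_decomp:
  assumes "x \<in> W n (Suc (2*n))"
  shows "\<exists>y\<in>Omega n. x - y \<in> Iideal n"
proof -
  from assms obtain y i where "y \<in> fa.span (Gs n (Suc (2*n)))" "i \<in> fa.span (Igens n)" "x = y + i"
    unfolding W_def fa.span_Un by blast
  then show ?thesis unfolding Omega_W Iideal_span by (intro bexI[of _ y]) auto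
qed

lemma long_zero:
  assumes "set as \<subseteq> {1..2*n}" "length as = Suc (2*n)"
  shows "asym as = 0"
proof (rule asym_not_distinct)
  show "\<not> distinct as"
  proof
    assume "distinct as"
    then have "card (set as) = Suc (2*n)" using assms(2) distinct_card by fastforce
    moreover have "card (set as) \<le> 2*n" using card_mono[OF _ assms(1)] by simp
    ultimately show False by simp
  qed
qed

lemma W_top: assumes "x \<in> W n (Suc (Suc (2*n)))" shows "x \<in> W n (Suc (2*n))"
proof -
  have "id x \<in> W n (Suc (2*n))"
    using assms
  proof (rule W_cases[where f=id])
    show "lin id" by (simp add: lin_def)
    show "fa.subspace (W n (Suc (2*n)))" by (rule W_sub)
    fix as assume l: "length as < Suc (Suc (2*n))" and s: "set as \<subseteq> {1..2*n}"
    show "id (asym as) \<in> W n (Suc (2*n))"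
    proof (cases "length as = Suc (2*n)")
      case True then show ?thesis using long_zero[OF s] by (simp add: W_zero)
    next
      case False then show ?thesis using l s by (simp add: asym_W)
    qed
  next
    fix i assume "i \<in> Iideal n" then show "id i \<in> W n (Suc (2*n))" by (simp add: I_W)
  qed
  then show ?thesis by simp
qed

lemma ad_W: assumes "x \<in> W n q" "a \<in> {1..2*n}" "b \<in> {1..2*n}" shows "act_even a b x \<in> W n q"
  using assms(1) lin_act_even W_sub
proof (rule W_cases)
  fix as assume "length as < q" "set as \<subseteq> {1..2*n}"
  then show "act_even a b (asym as) \<in> W n q" using assms(2,3) by (intro ad_asym_W)
next
  fix i assume "i \<in> Iideal n" then show "act_even a b i \<in> W n q" by (intro I_W I_act_even)
qed

theorem proposition3:
  fixes n :: nat
  assumes "n \<ge> 1"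
  shows "(\<forall>a\<in>{1..2*n}. \<forall>x\<in>Omega n. \<exists>y\<in>Omega n. act_odd a x - y \<in> Iideal n)
       \<and> (\<forall>a\<in>{1..2*n}. \<forall>b\<in>{1..2*n}. \<forall>x\<in>Omega n. \<exists>y\<in>Omega n. act_even a b x - y \<in> Iideal n)"
proof (intro conjI ballI)
  fix a x assume a: "a \<in> {1..2*n}" and x: "x \<in> Omega n"
  have xW: "x \<in> W n (Suc (2*n))"
    using x unfolding Omega_W W_def by (rule set_mp[OF fa.span_mono, rotated]) auto
  have "act_odd a x \<in> W n (Suc (Suc (2*n)))"
    by (rule S_W[OF C_all xW a])
  then show "\<exists>y\<in>Omega n. act_odd a x - y \<in> Iideal n"
    by (intro W_decomp W_top)
next
  fix a b x assume a: "a \<in> {1..2*n}" and b: "b \<in> {1..2*n}" and x: "x \<in> Omega n"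
  have xW: "x \<in> W n (Suc (2*n))"
    using x unfolding Omega_W W_def by (rule set_mp[OF fa.span_mono, rotated]) auto
  show "\<exists>y\<in>Omega n. act_even a b x - y \<in> Iideal n"
    by (intro W_decomp ad_W[OF xW a b])
qed

end
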